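(* Let $r\ge 1$ and $K\ge1$ be integers, $\beta_1,\beta_2>0$, $\theta_1,\theta_2>0$ and $\alpha>0$. Let $\zeta=(1,0,0)$, $\eta=(0,0,1)$, $v=(0,0,1)$, $v'=(0,1,0)$, and for $i=1,\dots,r$ let $k_i=2^{i-1}K\zeta\in\mathbb{Z}^3$ and $k_i'=k_i+\eta$. Define \[ u_0(x)=r^{-\beta_1}\sum_{i=1}^r|k_i|^{\theta_1}v\cos(k_i\cdot x),\qquad b_0(x)=r^{-\beta_2}\sum_{i=1}^r|k_i'|^{\theta_2}v'\cos(k_i'\cdot x). \] Then for all $t>0$, \[ \|e^{-t(-\Delta)^{\alpha}}u_0\|_{L^\infty}\lesssim r^{-\beta_1}t^{-\frac{\theta_1}{2\alpha}},\qquad \|e^{-t(-\Delta)^{\alpha}}b_0\|_{L^\infty}\lesssim r^{-\beta_2}t^{-\frac{\theta_2}{2\alpha}}, \] with implicit constants independent of $r$, $K$ and $t$.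
   Context: $e^{-t(-\Delta)^\alpha}$ denotes the fractional heat semigroup, i.e. the Fourier multiplier $e^{-t|\xi|^{2\alpha}}$; in particular $e^{-t(-\Delta)^\alpha}\big(w\cos(k\cdot x)\big)=e^{-|k|^{2\alpha}t}w\cos(k\cdot x)$. *)

theory Defs
  imports "HOL-Analysis.Analysis"
begin

text \<open>The fractional heat semigroup
  e^{-t(-\<Delta>)^\<alpha>} is the Fourier multiplier e^{-t|\<xi>|^{2\<alpha>}}, acting on each
  mode by e^{-|k|^{2\<alpha>} t} (and linearly on finite sums).\<close>

definition cos_sum :: "'i set \<Rightarrow> ('i \<Rightarrow> real^3) \<Rightarrow> ('i \<Rightarrow> real^3) \<Rightarrow> real^3 \<Rightarrow> real^3" where
  "cos_sum I k a x = (\<Sum>i\<in>I. cos (k i \<bullet> x) *\<^sub>R a i)"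

definition frac_heat_cos_sum ::
  "real \<Rightarrow> real \<Rightarrow> 'i set \<Rightarrow> ('i \<Rightarrow> real^3) \<Rightarrow> ('i \<Rightarrow> real^3) \<Rightarrow> real^3 \<Rightarrow> real^3" where
  "frac_heat_cos_sum \<alpha> t I k a x =
     (\<Sum>i\<in>I. exp (- (norm (k i) powr (2 * \<alpha>)) * t) *\<^sub>R (cos (k i \<bullet> x) *\<^sub>R a i))"

definition zeta3 :: "real^3" where "zeta3 = vector [1, 0, 0]"
definition eta3 :: "real^3" where "eta3 = vector [0, 0, 1]"
definition v3 :: "real^3" where "v3 = vector [0, 0, 1]"
definition v3' :: "real^3" where "v3' = vector [0, 1, 0]"

definition kvec :: "nat \<Rightarrow> nat \<Rightarrow> real^3" where
  "kvec K i = (2 ^ (i - 1) * real K) *\<^sub>R zeta3"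
definition kvec' :: "nat \<Rightarrow> nat \<Rightarrow> real^3" where
  "kvec' K i = kvec K i + eta3"

definition u0_coeff :: "real \<Rightarrow> real \<Rightarrow> nat \<Rightarrow> nat \<Rightarrow> nat \<Rightarrow> real^3" where
  "u0_coeff \<beta>1 \<theta>1 r K i = (real r powr (- \<beta>1) * norm (kvec K i) powr \<theta>1) *\<^sub>R v3"
definition b0_coeff :: "real \<Rightarrow> real \<Rightarrow> nat \<Rightarrow> nat \<Rightarrow> nat \<Rightarrow> real^3" where
  "b0_coeff \<beta>2 \<theta>2 r K i = (real r powr (- \<beta>2) * norm (kvec' K i) powr \<theta>2) *\<^sub>R v3'"

end

theory Submission
  imports Defs
begin

lemma pow_exp_bound:
  fixes p :: real assumes "p > 0"
  shows "\<exists>M>0. \<forall>s::real. s \<ge> 1 \<longrightarrow> s powr (2*p) \<le> M * exp s"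
proof -
  define N where "N = Suc (nat \<lceil>2*p\<rceil>)"
  have Npos: "N > 0" by (simp add: N_def)
  have N2p: "2*p \<le> real N" unfolding N_def by linarith
  show ?thesis
  proof (intro exI[of _ "real N ^ N"] conjI allI impI)
    show "0 < real N ^ N" using Npos by simp
    fix s :: real assume s: "s \<ge> 1"
    have "s powr (2*p) \<le> s powr real N" using s N2p by (intro powr_mono) auto
    also have "\<dots> = s ^ N" using s by (simp add: powr_realpow)
    also have "\<dots> = real N ^ N * (s / real N) ^ N" using Npos
      by (simp add: power_divide)
    also have "\<dots> \<le> real N ^ N * (1 + s / real N) ^ N"
      using s Npos by (intro mult_left_mono power_mono) auto
    also have "\<dots> \<le> real N ^ N * exp s"
      using s Npos by (intro mult_left_mono exp_ge_one_plus_x_over_n_power_n) auto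
    finally show "s powr (2*p) \<le> real N ^ N * exp s" .
  qed
qed

lemma geo_fin:
  fixes x :: real assumes "0 \<le> x" "x < 1" "finite J"
  shows "(\<Sum>j\<in>J. x ^ j) \<le> 1 / (1 - x)"
proof -
  have "(\<Sum>j\<in>J. x ^ j) \<le> (\<Sum>j. x ^ j)"
    using assms by (intro sum_le_suminf summable_geometric) auto
  also have "\<dots> = 1 / (1 - x)" using assms by (simp add: suminf_geometric)
  finally show ?thesis .
qed

lemma grow:
  fixes s :: "nat \<Rightarrow> real"
  assumes "\<And>i. q * s i \<le> s (Suc i)" "q \<ge> 0" "\<And>i. s i > 0" "i \<le> j"
  shows "q ^ (j - i) * s i \<le> s j"
  using assms(4)
proof (induction j rule: dec_induct)
  case base then show ?case by simp
next
  case (step j)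
  have "q ^ (Suc j - i) * s i = q * (q ^ (j - i) * s i)" using step(1)
    by (simp add: Suc_diff_le)
  also have "\<dots> \<le> q * s j" using step assms(2) by (intro mult_left_mono) auto
  also have "\<dots> \<le> s (Suc j)" by (rule assms(1))
  finally show ?case .
qed

lemma geo_sum:
  fixes q p :: real assumes q: "q > 1" and p: "p > 0"
  shows "\<exists>C>0. \<forall>(r::nat) (s::nat\<Rightarrow>real). (\<forall>i. s i > 0) \<longrightarrow> (\<forall>i. q * s i \<le> s (Suc i)) \<longrightarrow>
           (\<Sum>i<r. s i powr p * exp (- s i)) \<le> C"
proof -
  obtain M where M: "M > 0" "\<And>s::real. s \<ge> 1 \<Longrightarrow> s powr (2*p) \<le> M * exp s"
    using pow_exp_bound[OF p] by blast
  define x where "x = q powr (-p)"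
  have x0: "0 < x" using q by (simp add: x_def)
  have x1: "x < 1" unfolding x_def using q p by (simp add: powr_less_one)
  have xpow: "(q ^ n) powr (-p) = x ^ n" for n :: nat
    using q by (simp add: x_def powr_realpow[symmetric] powr_powr powr_power mult.commute)
  show ?thesis
  proof (intro exI[of _ "(1 + M) / (1 - x)"] conjI allI impI)
    show "0 < (1 + M) / (1 - x)" using M x1 by simp
    fix r :: nat and s :: "nat \<Rightarrow> real"
    assume spos: "\<forall>i. s i > 0" and sg: "\<forall>i. q * s i \<le> s (Suc i)"
    have gr: "i \<le> j \<Longrightarrow> q ^ (j - i) * s i \<le> s j" for i j
      using grow[of q s i j] spos sg q by auto
    define A where "A = {i\<in>{..<r}. s i \<le> 1}"
    define B where "B = {i\<in>{..<r}. \<not> s i \<le> 1}"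
    have finA: "finite A" and finB: "finite B" by (auto simp: A_def B_def)
    have AB: "{..<r} = A \<union> B" "A \<inter> B = {}" by (auto simp: A_def B_def)
    let ?g = "\<lambda>i. s i powr p * exp (- s i)"
    have SA: "sum ?g A \<le> 1 / (1 - x)"
    proof (cases "A = {}")
      case True then show ?thesis using x1 by simp
    next
      case False
      define m where "m = Max A"
      have mA: "m \<in> A" using False finA by (simp add: m_def)
      have leM: "i \<in> A \<Longrightarrow> i \<le> m" for i using finA by (simp add: m_def)
      have "sum ?g A \<le> (\<Sum>i\<in>A. x ^ (m - i))"
      proof (rule sum_mono)
        fix i assume iA: "i \<in> A"
        have si: "0 < s i" using spos by auto
        have qpos: "0 < q ^ (m - i)" using q by simp
        have "q ^ (m - i) * s i \<le> s m" using gr leM[OF iA] by auto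
        also have "s m \<le> 1" using mA by (simp add: A_def)
        finally have "s i \<le> 1 / q ^ (m - i)" using qpos by (simp add: field_simps)
        have "?g i \<le> s i powr p" using si by (simp add: mult_left_le)
        also have "\<dots> \<le> (1 / q ^ (m - i)) powr p"
          using \<open>s i \<le> 1 / q ^ (m - i)\<close> si p by (intro powr_mono2) auto
        also have "\<dots> = (q ^ (m - i)) powr (-p)" using qpos
          by (subst powr_divide) (auto simp: powr_minus divide_inverse)
        also have "\<dots> = x ^ (m - i)" by (rule xpow)
        finally show "?g i \<le> x ^ (m - i)" .
      qed
      also have "\<dots> = (\<Sum>j\<in>(\<lambda>i. m - i) ` A. x ^ j)"
      proof (rule sum.reindex[symmetric, unfolded comp_def])
        show "inj_on (\<lambda>i. m - i) A" unfolding inj_on_def proof (intro ballI impI) fix a b assume "a \<in> A" "b \<in> A" "m - a = m - b" then show "a = b" using leM[of a] leM[of b] by linarith qed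
      qed
      also have "\<dots> \<le> 1 / (1 - x)" using x0 x1 finA by (intro geo_fin) auto
      finally show ?thesis .
    qed
    have SB: "sum ?g B \<le> M / (1 - x)"
    proof (cases "B = {}")
      case True then show ?thesis using x1 M by simp
    next
      case False
      define m where "m = Min B"
      have mB: "m \<in> B" using False finB by (simp add: m_def)
      have geM: "i \<in> B \<Longrightarrow> m \<le> i" for i using finB by (simp add: m_def)
      have "sum ?g B \<le> (\<Sum>i\<in>B. M * x ^ (i - m))"
      proof (rule sum_mono)
        fix i assume iB: "i \<in> B"
        have si: "0 < s i" using spos by auto
        have qpos: "1 \<le> q ^ (i - m)" using q by simp
        have sm: "1 < s m" using mB by (simp add: B_def)
        have "q ^ (i - m) \<le> q ^ (i - m) * s m" using sm qpos by simp
        also have "\<dots> \<le> s i" using gr geM[OF iB] by auto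
        finally have qs: "q ^ (i - m) \<le> s i" .
        have s1: "1 \<le> s i" using qs qpos by linarith
        have "?g i = s i powr (2*p) * exp (- s i) * s i powr (-p)"
          using si by (simp add: powr_minus field_simps powr_mult_base powr_add[symmetric])
        also have "\<dots> \<le> M * exp (s i) * exp (- s i) * s i powr (-p)"
          using M(2)[OF s1] by (intro mult_right_mono) auto
        also have "\<dots> = M * s i powr (-p)" by (simp add: exp_minus)
        also have "\<dots> \<le> M * (q ^ (i - m)) powr (-p)"
          using M(1) qs qpos p by (intro mult_left_mono powr_mono2') auto
        also have "\<dots> = M * x ^ (i - m)" by (simp add: xpow)
        finally show "?g i \<le> M * x ^ (i - m)" .
      qed
      also have "\<dots> = M * (\<Sum>j\<in>(\<lambda>i. i - m) ` B. x ^ j)"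
        unfolding sum_distrib_left[symmetric]
      proof (rule arg_cong[where f="\<lambda>z. M * z"], rule sum.reindex[symmetric, unfolded comp_def])
        show "inj_on (\<lambda>i. i - m) B" unfolding inj_on_def proof (intro ballI impI) fix a b assume "a \<in> B" "b \<in> B" "a - m = b - m" then show "a = b" using geM[of a] geM[of b] by linarith qed
      qed
      also have "\<dots> \<le> M * (1 / (1 - x))" using x0 x1 finB M
        by (intro mult_left_mono geo_fin) auto
      finally show ?thesis by simp
    qed
    have "(\<Sum>i<r. ?g i) = sum ?g A + sum ?g B"
      using AB finA finB by (simp add: sum.union_disjoint)
    also have "\<dots> \<le> 1 / (1 - x) + M / (1 - x)" using SA SB by linarith
    also have "\<dots> = (1 + M) / (1 - x)" by (simp add: add_divide_distrib)
    finally show "(\<Sum>i<r. ?g i) \<le> (1 + M) / (1 - x)" .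
  qed
qed


lemma freq_sum:
  fixes \<alpha> \<theta> l :: real assumes l: "l > 1" and a: "\<alpha> > 0" and th: "\<theta> > 0"
  shows "\<exists>C>0. \<forall>(r::nat) (n::nat\<Rightarrow>real) t. (\<forall>i. n i > 0) \<longrightarrow> (\<forall>i. l * n i \<le> n (Suc i)) \<longrightarrow> t > 0 \<longrightarrow>
     (\<Sum>i<r. exp (- (n i powr (2*\<alpha>)) * t) * n i powr \<theta>) \<le> C * t powr (- \<theta> / (2*\<alpha>))"
proof -
  define p where "p = \<theta> / (2*\<alpha>)"
  define q where "q = l powr (2*\<alpha>)"
  have p: "p > 0" using a th by (simp add: p_def)
  have q: "q > 1" using l a by (simp add: q_def)
  obtain C where C: "C > 0" "\<And>r (s::nat\<Rightarrow>real). (\<forall>i. s i > 0) \<Longrightarrow> (\<forall>i. q * s i \<le> s (Suc i)) \<Longrightarrow>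
           (\<Sum>i<r. s i powr p * exp (- s i)) \<le> C"
    using geo_sum[OF q p] by blast
  show ?thesis
  proof (intro exI[of _ C] conjI allI impI)
    show "C > 0" by (rule C(1))
    fix r :: nat and n :: "nat \<Rightarrow> real" and t :: real
    assume npos: "\<forall>i. n i > 0" and ng: "\<forall>i. l * n i \<le> n (Suc i)" and t: "t > 0"
    define s where "s i = n i powr (2*\<alpha>) * t" for i
    have spos: "\<forall>i. s i > 0" using npos t by (auto simp: s_def intro!: mult_pos_pos) (metis less_irrefl)
    have sg: "\<forall>i. q * s i \<le> s (Suc i)"
    proof
      fix i
      have "q * n i powr (2*\<alpha>) = (l * n i) powr (2*\<alpha>)" using l npos
        by (simp add: q_def powr_mult)
      also have "\<dots> \<le> n (Suc i) powr (2*\<alpha>)"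
        using ng npos l a by (intro powr_mono2) (auto intro: less_imp_le)
      finally show "q * s i \<le> s (Suc i)" using t unfolding s_def
        by (simp add: mult.assoc[symmetric])
    qed
    have eq: "exp (- (n i powr (2*\<alpha>)) * t) * n i powr \<theta> = t powr (-p) * (s i powr p * exp (- s i))" for i
    proof -
      have "s i powr p = n i powr \<theta> * t powr p"
        using npos t a unfolding s_def p_def by (simp add: powr_mult powr_powr)
      moreover have e: "exp (- s i) = exp (- (n i powr (2*\<alpha>)) * t)" by (simp add: s_def)
      moreover have tt: "t powr (-p) * t powr p = 1" using t by (simp add: powr_add[symmetric])
      ultimately have "t powr (-p) * (s i powr p * exp (- s i))
          = (t powr (-p) * t powr p) * (exp (- (n i powr (2*\<alpha>)) * t) * n i powr \<theta>)"
        by (simp add: ac_simps)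
      then show ?thesis using tt by simp
    qed
    have "(\<Sum>i<r. exp (- (n i powr (2*\<alpha>)) * t) * n i powr \<theta>) = t powr (-p) * (\<Sum>i<r. s i powr p * exp (- s i))"
      unfolding sum_distrib_left by (rule sum.cong[OF refl eq])
    also have "\<dots> \<le> t powr (-p) * C" using C(2)[OF spos sg] by (intro mult_left_mono) auto
    finally show "(\<Sum>i<r. exp (- (n i powr (2*\<alpha>)) * t) * n i powr \<theta>) \<le> C * t powr (- \<theta> / (2*\<alpha>))"
      by (simp add: p_def mult.commute)
  qed
qed

lemma nsq: "norm (y::real^3) = sqrt ((y$1)^2 + (y$2)^2 + (y$3)^2)"
  unfolding norm_eq_sqrt_inner inner_vec_def sum_3 by (simp add: power2_eq_square)

lemma norm_kvec: "norm (kvec K i) = 2 ^ (i - 1) * real K"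
  unfolding kvec_def nsq zeta3_def by simp
lemma norm_kvec': "norm (kvec' K i) = sqrt ((2 ^ (i - 1) * real K)^2 + 1)"
  unfolding kvec'_def kvec_def nsq zeta3_def eta3_def by simp
lemma norm_v3: "norm v3 = 1" "norm v3' = 1"
  unfolding nsq v3_def v3'_def by simp_all

lemma heat_norm:
  "norm (frac_heat_cos_sum \<alpha> t I k a x) \<le> (\<Sum>i\<in>I. exp (- (norm (k i) powr (2 * \<alpha>)) * t) * norm (a i))"
  unfolding frac_heat_cos_sum_def
proof (rule order.trans[OF norm_sum sum_mono])
  fix i
  have "\<bar>cos (k i \<bullet> x)\<bar> * norm (a i) \<le> 1 * norm (a i)"
    by (intro mult_right_mono) auto
  then show "norm (exp (- (norm (k i) powr (2 * \<alpha>)) * t) *\<^sub>R cos (k i \<bullet> x) *\<^sub>R a i)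
     \<le> exp (- (norm (k i) powr (2 * \<alpha>)) * t) * norm (a i)"
    by (simp add: abs_mult mult.assoc mult_left_mono)
qed

lemma shift1: "sum f {1..r} = (\<Sum>j<r. f (Suc j))"
  by (induction r) (auto simp: atLeastAtMostSuc_conv add.commute)

theorem lemma4p3:
  fixes \<beta>1 \<beta>2 \<theta>1 \<theta>2 \<alpha> :: real
  assumes "\<beta>1 > 0" "\<beta>2 > 0" "\<theta>1 > 0" "\<theta>2 > 0" "\<alpha> > 0"
  shows "\<exists>C>0. \<forall>(r::nat) (K::nat) (t::real). r \<ge> 1 \<longrightarrow> K \<ge> 1 \<longrightarrow> t > 0 \<longrightarrow>
     (\<forall>x. norm (frac_heat_cos_sum \<alpha> t {1..r} (kvec K) (u0_coeff \<beta>1 \<theta>1 r K) x)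
            \<le> C * real r powr (- \<beta>1) * t powr (- \<theta>1 / (2 * \<alpha>))) \<and>
     (\<forall>x. norm (frac_heat_cos_sum \<alpha> t {1..r} (kvec' K) (b0_coeff \<beta>2 \<theta>2 r K) x)
            \<le> C * real r powr (- \<beta>2) * t powr (- \<theta>2 / (2 * \<alpha>)))"
proof -
  have l: "sqrt 2 > (1::real)" by simp
  obtain C1 where C1: "C1 > 0" "\<And>r (n::nat\<Rightarrow>real) t. (\<forall>i. n i > 0) \<Longrightarrow> (\<forall>i. sqrt 2 * n i \<le> n (Suc i)) \<Longrightarrow> t > 0 \<Longrightarrow>
     (\<Sum>i<r. exp (- (n i powr (2*\<alpha>)) * t) * n i powr \<theta>1) \<le> C1 * t powr (- \<theta>1 / (2*\<alpha>))"
    using freq_sum[OF l assms(5) assms(3)] by blast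
  obtain C2 where C2: "C2 > 0" "\<And>r (n::nat\<Rightarrow>real) t. (\<forall>i. n i > 0) \<Longrightarrow> (\<forall>i. sqrt 2 * n i \<le> n (Suc i)) \<Longrightarrow> t > 0 \<Longrightarrow>
     (\<Sum>i<r. exp (- (n i powr (2*\<alpha>)) * t) * n i powr \<theta>2) \<le> C2 * t powr (- \<theta>2 / (2*\<alpha>))"
    using freq_sum[OF l assms(5) assms(4)] by blast
  show ?thesis
  proof (intro exI[of _ "max C1 C2"] conjI allI impI)
    show "0 < max C1 C2" using C1 by simp
    fix r K :: nat and t :: real and x :: "real^3"
    assume r: "1 \<le> r" and K: "1 \<le> K" and t: "0 < t"
    have rp: "0 < real r powr (- \<beta>1)" "0 < real r powr (- \<beta>2)" using r by auto
    have tp: "0 \<le> t powr (- \<theta>1 / (2 * \<alpha>))" "0 \<le> t powr (- \<theta>2 / (2 * \<alpha>))" by auto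
    define n where "n j = (2::real) ^ j * real K" for j
    have npos: "\<forall>i. n i > 0" using K by (simp add: n_def)
    have ng: "\<forall>i. sqrt 2 * n i \<le> n (Suc i)"
    proof
      fix i
      have "sqrt 2 \<le> (2::real)" by (simp add: real_sqrt_le_iff[of 2 4, simplified])
      then show "sqrt 2 * n i \<le> n (Suc i)" using npos
        by (simp add: n_def mult_right_mono mult.assoc)
    qed
    have "norm (frac_heat_cos_sum \<alpha> t {1..r} (kvec K) (u0_coeff \<beta>1 \<theta>1 r K) x)
        \<le> (\<Sum>i\<in>{1..r}. exp (- (norm (kvec K i) powr (2 * \<alpha>)) * t) * norm (u0_coeff \<beta>1 \<theta>1 r K i))"
      by (rule heat_norm)
    also have "\<dots> = real r powr (- \<beta>1) * (\<Sum>j<r. exp (- (n j powr (2*\<alpha>)) * t) * n j powr \<theta>1)"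
      unfolding shift1 sum_distrib_left
      by (intro sum.cong refl) (simp add: u0_coeff_def norm_v3 norm_kvec n_def abs_mult)
    also have "\<dots> \<le> real r powr (- \<beta>1) * (max C1 C2 * t powr (- \<theta>1 / (2*\<alpha>)))"
      using C1(2)[OF npos ng t, of r] rp tp
      by (intro mult_left_mono order.trans[OF _ mult_right_mono[of C1 "max C1 C2"]]) auto
    finally show "norm (frac_heat_cos_sum \<alpha> t {1..r} (kvec K) (u0_coeff \<beta>1 \<theta>1 r K) x)
            \<le> max C1 C2 * real r powr (- \<beta>1) * t powr (- \<theta>1 / (2 * \<alpha>))" by (simp add: ac_simps)
  next
    fix r K :: nat and t :: real and x :: "real^3"
    assume r: "1 \<le> r" and K: "1 \<le> K" and t: "0 < t"
    have rp: "0 < real r powr (- \<beta>2)" using r by auto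
    have tp: "0 \<le> t powr (- \<theta>2 / (2 * \<alpha>))" by auto
    define n where "n j = sqrt (((2::real) ^ j * real K)^2 + 1)" for j
    have npos: "\<forall>i. n i > 0" by (auto simp: n_def intro!: add_nonneg_pos)
    have ng: "\<forall>i. sqrt 2 * n i \<le> n (Suc i)"
    proof
      fix i
      define a where "a = (2::real) ^ i * real K"
      have "(1::real) \<le> 2 ^ i" by simp
      moreover have "(1::real) \<le> real K" using K by simp
      ultimately have a1: "1 \<le> a" unfolding a_def using mult_mono[of 1 "2^i" 1 "real K"] by simp
      have aa: "1 \<le> a * a" using a1 mult_mono[of 1 a 1 a] by simp
      have "sqrt 2 * n i = sqrt (2 * (a^2 + 1))" by (simp only: n_def a_def real_sqrt_mult)
      also have "\<dots> \<le> sqrt ((2*a)^2 + 1)" using aa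
        by (intro real_sqrt_le_mono) (simp add: power2_eq_square)
      also have "\<dots> = n (Suc i)" by (simp add: n_def a_def mult.assoc)
      finally show "sqrt 2 * n i \<le> n (Suc i)" .
    qed
    have "norm (frac_heat_cos_sum \<alpha> t {1..r} (kvec' K) (b0_coeff \<beta>2 \<theta>2 r K) x)
        \<le> (\<Sum>i\<in>{1..r}. exp (- (norm (kvec' K i) powr (2 * \<alpha>)) * t) * norm (b0_coeff \<beta>2 \<theta>2 r K i))"
      by (rule heat_norm)
    also have "\<dots> = real r powr (- \<beta>2) * (\<Sum>j<r. exp (- (n j powr (2*\<alpha>)) * t) * n j powr \<theta>2)"
      unfolding shift1 sum_distrib_left
      by (intro sum.cong refl) (simp add: b0_coeff_def norm_v3 norm_kvec' n_def abs_mult)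
    also have "\<dots> \<le> real r powr (- \<beta>2) * (max C1 C2 * t powr (- \<theta>2 / (2*\<alpha>)))"
      using C2(2)[OF npos ng t, of r] rp tp
      by (intro mult_left_mono order.trans[OF _ mult_right_mono[of C2 "max C1 C2"]]) auto
    finally show "norm (frac_heat_cos_sum \<alpha> t {1..r} (kvec' K) (b0_coeff \<beta>2 \<theta>2 r K) x)
            \<le> max C1 C2 * real r powr (- \<beta>2) * t powr (- \<theta>2 / (2 * \<alpha>))" by (simp add: ac_simps)
  qed
qed

end
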